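(* Let $G$ be a graph. Then \[\chi(G) \leq \frac{1}{2} (\omega(G) + \Delta(G) + 1) + \frac{\delta(\overline{G}) - \eta(G)}{4}.\]
   Context: All graphs are finite and simple with non-empty vertex set. $\chi$ is the chromatic number, $\omega$ the clique number, $\Delta$ the maximum degree; $\overline{G}$ is the complement of $G$ and $\delta(\overline{G})$ its minimum degree. The chromatic excess of $G$ is $\eta(G) = \max_{H} \left(|H| - 3\chi(H)\right)$, where the maximum ranges over all induced subgraphs $H$ of $G$ with non-empty vertex set and $|H|$ is the number of vertices of $H$. *)

theory Defs
  imports Complex_Main
begin

definition graph :: "'a set \<Rightarrow> ('a \<Rightarrow> 'a \<Rightarrow> bool) \<Rightarrow> bool" where
  "graph V E \<longleftrightarrow> finite V \<and> V \<noteq> {} \<and>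
     (\<forall>u v. E u v \<longrightarrow> u \<in> V \<and> v \<in> V) \<and>
     (\<forall>u v. E u v \<longrightarrow> E v u) \<and> (\<forall>v. \<not> E v v)"

definition colouring :: "'a set \<Rightarrow> ('a \<Rightarrow> 'a \<Rightarrow> bool) \<Rightarrow> nat \<Rightarrow> ('a \<Rightarrow> nat) \<Rightarrow> bool" where
  "colouring V E k c \<longleftrightarrow> (\<forall>v\<in>V. c v < k) \<and> (\<forall>u\<in>V. \<forall>v\<in>V. E u v \<longrightarrow> c u \<noteq> c v)"

definition chromatic_number :: "'a set \<Rightarrow> ('a \<Rightarrow> 'a \<Rightarrow> bool) \<Rightarrow> nat" where
  "chromatic_number V E = (LEAST k. \<exists>c. colouring V E k c)"

definition clique :: "'a set \<Rightarrow> ('a \<Rightarrow> 'a \<Rightarrow> bool) \<Rightarrow> 'a set \<Rightarrow> bool" where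
  "clique V E K \<longleftrightarrow> K \<subseteq> V \<and> (\<forall>u\<in>K. \<forall>v\<in>K. u \<noteq> v \<longrightarrow> E u v)"

definition clique_number :: "'a set \<Rightarrow> ('a \<Rightarrow> 'a \<Rightarrow> bool) \<Rightarrow> nat" where
  "clique_number V E = Max (card ` {K. clique V E K})"

definition degree :: "'a set \<Rightarrow> ('a \<Rightarrow> 'a \<Rightarrow> bool) \<Rightarrow> 'a \<Rightarrow> nat" where
  "degree V E v = card {u\<in>V. E v u}"

definition max_degree :: "'a set \<Rightarrow> ('a \<Rightarrow> 'a \<Rightarrow> bool) \<Rightarrow> nat" where
  "max_degree V E = Max (degree V E ` V)"

definition complement :: "'a set \<Rightarrow> ('a \<Rightarrow> 'a \<Rightarrow> bool) \<Rightarrow> 'a \<Rightarrow> 'a \<Rightarrow> bool" where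
  "complement V E u v \<longleftrightarrow> u \<in> V \<and> v \<in> V \<and> u \<noteq> v \<and> \<not> E u v"

definition min_degree :: "'a set \<Rightarrow> ('a \<Rightarrow> 'a \<Rightarrow> bool) \<Rightarrow> nat" where
  "min_degree V E = Min (degree V E ` V)"

definition induced :: "('a \<Rightarrow> 'a \<Rightarrow> bool) \<Rightarrow> 'a set \<Rightarrow> 'a \<Rightarrow> 'a \<Rightarrow> bool" where
  "induced E H u v \<longleftrightarrow> u \<in> H \<and> v \<in> H \<and> E u v"

definition chromatic_excess :: "'a set \<Rightarrow> ('a \<Rightarrow> 'a \<Rightarrow> bool) \<Rightarrow> int" where
  "chromatic_excess V E =
     Max ((\<lambda>H. int (card H) - 3 * int (chromatic_number H (induced E H))) ` {H. H \<subseteq> V \<and> H \<noteq> {}})"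

end

theory Submission
  imports Defs
begin


locale sg =
  fixes V :: "'a set" and E :: "'a \<Rightarrow> 'a \<Rightarrow> bool"
  assumes G: "graph V E"
begin

lemma finV: "finite V" using G by (simp add: graph_def)
lemma symE: "E u v \<Longrightarrow> E v u" using G by (auto simp: graph_def)
lemma irr: "\<not> E v v" using G by (simp add: graph_def)

definition indep :: "'a set \<Rightarrow> bool" where "indep I \<longleftrightarrow> (\<forall>a\<in>I. \<forall>b\<in>I. \<not> E a b)"
definition nd :: "'a set \<Rightarrow> 'a \<Rightarrow> nat" where "nd W v = card {u\<in>W. u \<noteq> v \<and> \<not> E v u}"
abbreviation chi where "chi W \<equiv> chromatic_number W E"
abbreviation om where "om W \<equiv> clique_number W E"

lemma colouring_exists: "finite W \<Longrightarrow> \<exists>c. colouring W E (card W) c"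
proof -
  assume "finite W"
  then obtain h where h: "bij_betw h W {0..<card W}" using ex_bij_betw_finite_nat by blast
  have "colouring W E (card W) h"
    unfolding colouring_def
  proof (intro conjI ballI impI)
    fix v assume "v \<in> W" then show "h v < card W" using h by (auto simp: bij_betw_def)
  next
    fix u v assume "u \<in> W" "v \<in> W" "E u v"
    then have "u \<noteq> v" using irr by auto
    then show "h u \<noteq> h v" using h \<open>u \<in> W\<close> \<open>v \<in> W\<close> by (auto simp: bij_betw_def inj_on_def)
  qed
  then show ?thesis by blast
qed

lemma chi_le: "colouring W E k c \<Longrightarrow> chi W \<le> k"
  unfolding chromatic_number_def by (rule Least_le) blast

lemma chi_opt: "finite W \<Longrightarrow> \<exists>c. colouring W E (chi W) c"
proof -
  assume "finite W"
  then have "\<exists>k c. colouring W E k c" using colouring_exists by blast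
  then show ?thesis unfolding chromatic_number_def by (rule LeastI_ex)
qed

lemma chi_empty: "chi {} = 0"
proof -
  have "colouring {} E 0 (\<lambda>_. 0)" by (simp add: colouring_def)
  then show ?thesis using chi_le by fastforce
qed

lemma colouring_mono: "colouring W E k c \<Longrightarrow> W' \<subseteq> W \<Longrightarrow> colouring W' E k c"
  unfolding colouring_def by blast

lemma om_ge: "finite W \<Longrightarrow> clique W E K \<Longrightarrow> card K \<le> om W"
  unfolding clique_number_def
proof -
  assume f: "finite W" and K: "clique W E K"
  have "{K. clique W E K} \<subseteq> Pow W" by (auto simp: clique_def)
  then have "finite {K. clique W E K}" using f finite_subset by blast
  then show "card K \<le> Max (card ` {K. clique W E K})" using K by (intro Max_ge) auto
qed

lemma om_mono: "finite W \<Longrightarrow> W' \<subseteq> W \<Longrightarrow> om W' \<le> om W"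
proof -
  assume f: "finite W" and s: "W' \<subseteq> W"
  have "{K. clique W' E K} \<subseteq> Pow W'" by (auto simp: clique_def)
  then have fin: "finite {K. clique W' E K}" using f s finite_subset by (metis finite_Pow_iff)
  have ne: "{K. clique W' E K} \<noteq> {}" by (auto simp: clique_def intro!: exI[of _ "{}"])
  have "om W' \<in> card ` {K. clique W' E K}"
    unfolding clique_number_def using fin ne by (intro Max_in) auto
  then obtain K where K: "clique W' E K" "om W' = card K" by auto
  have "clique W E K" using K s by (auto simp: clique_def)
  then show ?thesis using K om_ge f by auto
qed

lemma om_single: "finite W \<Longrightarrow> x \<in> W \<Longrightarrow> 1 \<le> om W"
proof -
  assume "finite W" "x \<in> W"
  then have "clique W E {x}" by (auto simp: clique_def)
  then show ?thesis using om_ge \<open>finite W\<close> by fastforce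
qed

lemma drop_colour:
  assumes c: "colouring S E k c" and j: "j < k" and nj: "\<forall>v\<in>S. c v \<noteq> j"
  shows "colouring S E (k - 1) (\<lambda>v. if c v > j then c v - 1 else c v)"
  unfolding colouring_def
proof (intro conjI ballI impI)
  fix v assume "v \<in> S" then show "(if c v > j then c v - 1 else c v) < k - 1"
    using c j nj unfolding colouring_def by force
next
  fix u v assume "u \<in> S" "v \<in> S" "E u v"
  then have "c u \<noteq> c v" "c u \<noteq> j" "c v \<noteq> j" using c nj unfolding colouring_def by auto
  then show "(if c u > j then c u - 1 else c u) \<noteq> (if c v > j then c v - 1 else c v)" by auto
qed

lemma extend_indep:
  assumes c: "colouring W' E k c" and I: "indep I"
  shows "colouring (W' \<union> I) E (Suc k) (\<lambda>v. if v \<in> I then k else c v)"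
  using assms unfolding colouring_def indep_def by auto

lemma maximal_indep:
  assumes f: "finite W" and J: "J \<subseteq> W" "indep J"
  shows "\<exists>I. J \<subseteq> I \<and> I \<subseteq> W \<and> indep I \<and> (\<forall>z\<in>W - I. \<exists>i\<in>I. E z i)"
proof -
  let ?S = "{I. J \<subseteq> I \<and> I \<subseteq> W \<and> indep I}"
  have "?S \<subseteq> Pow W" by auto
  then have fin: "finite ?S" using f by (meson finite_Pow_iff finite_subset)
  have ne: "?S \<noteq> {}" using J by auto
  obtain I where I: "I \<in> ?S" and mx: "\<forall>b\<in>?S. I \<le> b \<longrightarrow> I = b"
    using finite_has_maximal[OF fin ne] by blast
  have "\<forall>z\<in>W - I. \<exists>i\<in>I. E z i"
  proof
    fix z assume z: "z \<in> W - I"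
    show "\<exists>i\<in>I. E z i"
    proof (rule ccontr)
      assume "\<not> (\<exists>i\<in>I. E z i)"
      then have "indep (insert z I)" using I irr symE unfolding indep_def by blast
      then have "insert z I \<in> ?S" using I z by auto
      then show False using mx z by blast
    qed
  qed
  then show ?thesis using I by blast
qed

lemma nd_remove:
  assumes f: "finite W" and IW: "I \<subseteq> W" and z: "z \<in> W - I" and i: "i \<in> I" and e: "E z i"
  shows "nd W z \<le> nd (W - I) z + (card I - 1)"
proof -
  have "{u\<in>W. u \<noteq> z \<and> \<not> E z u} \<subseteq> {u\<in>W - I. u \<noteq> z \<and> \<not> E z u} \<union> (I - {i})"
    using e by auto
  then have "nd W z \<le> card ({u\<in>W - I. u \<noteq> z \<and> \<not> E z u} \<union> (I - {i}))"
    unfolding nd_def using f IW by (intro card_mono) (auto intro: finite_subset)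
  also have "\<dots> \<le> nd (W - I) z + card (I - {i})" unfolding nd_def by (rule card_Un_le)
  also have "card (I - {i}) = card I - 1" using i by simp
  finally show ?thesis .
qed

lemma nd_le: "finite W \<Longrightarrow> v \<in> W \<Longrightarrow> nd W v \<le> card W - 1"
proof -
  assume "finite W" "v \<in> W"
  then have "nd W v \<le> card (W - {v})" unfolding nd_def by (intro card_mono) auto
  then show ?thesis using \<open>v \<in> W\<close> by simp
qed

end



context sg
begin

lemma critical:
  assumes WV: "W \<subseteq> V" and w: "w \<in> W"
    and nt: "\<forall>a\<in>W. \<forall>b\<in>W. \<forall>d\<in>W. a \<noteq> b \<longrightarrow> a \<noteq> d \<longrightarrow> b \<noteq> d \<longrightarrow> E a b \<or> E a d \<or> E b d"
    and crit: "chi (W - {w}) < chi W"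
  shows "4 * chi W + nd W w \<le> 2 * card W + 2 * om W"
proof -
  have finW: "finite W" using WV finV finite_subset by blast
  define k' where "k' = chi (W - {w})"
  obtain c' where c': "colouring (W - {w}) E k' c'"
    using chi_opt[of "W - {w}"] finW unfolding k'_def by auto
  define K where "K = Suc k'"
  define c where "c = c'(w := k')"
  have col: "colouring W E K c"
    unfolding colouring_def
  proof (intro conjI ballI impI)
    fix v assume "v \<in> W" then show "c v < K" using c' unfolding colouring_def c_def K_def
      by (cases "v = w") (auto simp: less_Suc_eq)
  next
    fix a b assume ab: "a \<in> W" "b \<in> W" "E a b"
    then have "a \<noteq> b" using irr by auto
    have lt: "\<forall>v\<in>W - {w}. c' v < k'" and pr: "\<forall>u\<in>W - {w}. \<forall>v\<in>W - {w}. E u v \<longrightarrow> c' u \<noteq> c' v"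
      using c' unfolding colouring_def by auto
    show "c a \<noteq> c b"
    proof (cases "a = w")
      case True then show ?thesis using lt ab \<open>a \<noteq> b\<close> unfolding c_def by fastforce
    next
      case False
      then show ?thesis using lt pr ab \<open>a \<noteq> b\<close> unfolding c_def by (cases "b = w") fastforce+
    qed
  qed
  have KK: "chi W = K" using chi_le[OF col] crit unfolding K_def k'_def by linarith
  have opt: False if "colouring W E K c2" "j < K" "\<forall>v\<in>W. c2 v \<noteq> j" for c2 j
    using chi_le[OF drop_colour[OF that]] KK K_def by simp
  have proper: "\<not> E a b" if "a \<in> W" "b \<in> W" "c a = c b" for a b
    using col that unfolding colouring_def by blast
  have cw: "v = w" if "v \<in> W" "c v = c w" for v
  proof (rule ccontr)
    assume vw: "v \<noteq> w"
    then have "c' v < k'" using c' that unfolding colouring_def by auto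
    then show False using that vw unfolding c_def by simp
  qed
  have cK: "c v < K" if "v \<in> W" for v using col that unfolding colouring_def by blast
  define U where "U = {u\<in>W. \<forall>v\<in>W. c v = c u \<longrightarrow> v = u}"
  define mate where "mate x = (SOME y. y \<in> W \<and> y \<noteq> x \<and> c y = c x)" for x
  have mate: "mate x \<in> W \<and> mate x \<noteq> x \<and> c (mate x) = c x" if "x \<in> W - U" for x
  proof -
    have "\<exists>y. y \<in> W \<and> y \<noteq> x \<and> c y = c x" using that unfolding U_def by auto
    then show ?thesis unfolding mate_def by (rule someI_ex)
  qed
  have mate_only: "v = x \<or> v = mate x" if "x \<in> W - U" "v \<in> W" "c v = c x" for x v
  proof (rule ccontr)
    assume nv: "\<not> (v = x \<or> v = mate x)"
    have "mate x \<in> W" "mate x \<noteq> x" "c (mate x) = c x" using mate[OF that(1)] by auto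
    note h = this
    have "E x (mate x) \<or> E x v \<or> E (mate x) v"
      using nt[rule_format, of x "mate x" v] h nv that by (metis DiffD1)
    then show False using proper h that by auto
  qed
  have mate_notU: "mate x \<in> W - U" if "x \<in> W - U" for x
    using mate[OF that] that unfolding U_def by auto
  have wU: "w \<in> U" using w cw unfolding U_def by auto
  have Uclique: "E u1 u2" if u12: "u1 \<in> U" "u2 \<in> U" "u1 \<noteq> u2" for u1 u2
  proof (rule ccontr)
    assume ne: "\<not> E u1 u2"
    define c2 where "c2 = c(u2 := c u1)"
    have s1: "v = u1" if "v \<in> W" "c v = c u1" for v using that \<open>u1 \<in> U\<close> unfolding U_def by auto
    have s2: "v = u2" if "v \<in> W" "c v = c u2" for v using that \<open>u2 \<in> U\<close> unfolding U_def by auto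
    have W12: "u1 \<in> W" "u2 \<in> W" using u12 unfolding U_def by auto
    have key: "\<not> E a b" if ab: "a \<in> W" "b \<in> W" "c2 a = c2 b" for a b
    proof (cases "a = b")
      case True then show ?thesis using irr by simp
    next
      case False
      consider (1) "a = u2" | (2) "b = u2" "a \<noteq> u2" | (3) "a \<noteq> u2" "b \<noteq> u2" by blast
      then show ?thesis
      proof cases
        case 1
        then have "c b = c u1" using ab False unfolding c2_def by simp
        then have "b = u1" using s1 ab by blast
        then show ?thesis using 1 ne symE by blast
      next
        case 2
        then have "c a = c u1" using ab False unfolding c2_def by simp
        then have "a = u1" using s1 ab by blast
        then show ?thesis using 2 ne by blast
      next
        case 3
        then have "c a = c b" using ab unfolding c2_def by simp
        then show ?thesis using proper ab by blast
      qed
    qed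
    have "colouring W E K c2" unfolding colouring_def
    proof (intro conjI ballI impI)
      fix v assume "v \<in> W" then show "c2 v < K" using cK W12 unfolding c2_def by auto
    next
      fix a b assume ab: "a \<in> W" "b \<in> W" "E a b"
      then show "c2 a \<noteq> c2 b" using key by blast
    qed
    moreover have "c2 v \<noteq> c u2" if "v \<in> W" for v
    proof (cases "v = u2")
      case True
      then show ?thesis using s1 W12 u12 unfolding c2_def by force
    next
      case False
      then show ?thesis using s2 that unfolding c2_def by force
    qed
    ultimately show False using opt cK W12 by blast
  qed
  define A where "A = {u\<in>W. u \<noteq> w \<and> \<not> E w u}"
  have ndA: "nd W w = card A" unfolding nd_def A_def by simp
  have AU: "x \<in> W - U" if "x \<in> A" for x using that Uclique wU unfolding A_def by auto
  have Aclique: "E x y" if "x \<in> A" "y \<in> A" "x \<noteq> y" for x y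
  proof -
    have "E w x \<or> E w y \<or> E x y" using nt[rule_format, of w x y] that w unfolding A_def by auto
    then show ?thesis using that unfolding A_def by auto
  qed
  have YU: "E (mate x) u" if xA: "x \<in> A" and uU: "u \<in> U" for x u
  proof (rule ccontr)
    assume ne: "\<not> E (mate x) u"
    define y where "y = mate x"
    have xW: "x \<in> W - U" using AU xA .
    have y: "y \<in> W - U" "y \<noteq> x" "c y = c x" using mate[OF xW] mate_notU[OF xW] unfolding y_def by auto
    have uW: "u \<in> W" using uU unfolding U_def by auto
    have nwx: "\<not> E w x" "\<not> E x w" using xA symE unfolding A_def by auto
    have nxy: "\<not> E x y" "\<not> E y x" using proper y xW by auto
    have nyu: "\<not> E y u" "\<not> E u y" using ne symE unfolding y_def by auto
    show False
    proof (cases "u = w")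
      case True
      have "w \<noteq> x" "w \<noteq> y" using xW y wU by auto
      then show False using nt w xW y nwx nxy nyu True by (metis DiffD1)
    next
      case False
      have su: "v = u" if "v \<in> W" "c v = c u" for v using that uU unfolding U_def by auto
      have sx: "v = x \<or> v = y" if "v \<in> W" "c v = c x" for v using mate_only[OF xW that] unfolding y_def by auto
      have xw: "x \<noteq> w" "x \<noteq> u" using xW wU uU by auto
      have yw: "y \<noteq> w" "y \<noteq> u" using y wU uU by auto
      have cwy: "c w \<noteq> c y"
      proof
        assume "c w = c y" then have "y = w" using cw y by (metis DiffD1)
        then show False using y wU by blast
      qed
      define c2 where "c2 = c(x := c w, u := c y)"
      have key: "\<not> E a b" if ab: "a \<in> W" "b \<in> W" "c2 a = c2 b" for a b
      proof (cases "a = b")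
        case True then show ?thesis using irr by simp
      next
        case F: False
        consider (xu) "a = x" "b = u" | (ux) "a = u" "b = x" | (xo) "a = x" "b \<noteq> x" "b \<noteq> u"
          | (ox) "b = x" "a \<noteq> x" "a \<noteq> u" | (uo) "a = u" "b \<noteq> x" "b \<noteq> u"
          | (ou) "b = u" "a \<noteq> x" "a \<noteq> u" | (oo) "a \<noteq> x" "a \<noteq> u" "b \<noteq> x" "b \<noteq> u"
          using F by blast
        then show ?thesis
        proof cases
          case xu then show ?thesis using cwy xw ab by (simp add: c2_def)
        next
          case ux then show ?thesis using cwy xw ab by (simp add: c2_def)
        next
          case xo
          then have "c b = c w" using ab xw unfolding c2_def by simp
          then have "b = w" using cw ab by blast
          then show ?thesis using xo nwx by simp
        next
          case ox
          then have "c a = c w" using ab xw unfolding c2_def by simp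
          then have "a = w" using cw ab by blast
          then show ?thesis using ox nwx by simp
        next
          case uo
          then have "c b = c x" using ab xw y unfolding c2_def by simp
          then have "b = y" using sx ab uo by blast
          then show ?thesis using uo nyu by simp
        next
          case ou
          then have "c a = c x" using ab xw y unfolding c2_def by simp
          then have "a = y" using sx ab ou by blast
          then show ?thesis using ou nyu by simp
        next
          case oo
          then have "c a = c b" using ab unfolding c2_def by simp
          then show ?thesis using proper ab by blast
        qed
      qed
      have "colouring W E K c2" unfolding colouring_def
      proof (intro conjI ballI impI)
        fix v assume "v \<in> W" then show "c2 v < K" using cK w y xW unfolding c2_def by auto
      next
        fix a b assume ab: "a \<in> W" "b \<in> W" "E a b"
        then show "c2 a \<noteq> c2 b" using key by blast
      qed
      moreover have "c2 v \<noteq> c u" if "v \<in> W" for v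
      proof -
        consider "v = x" | "v = u" | "v \<noteq> x" "v \<noteq> u" by blast
        then show ?thesis
        proof cases
          case 1 then show ?thesis using cw uW False xw unfolding c2_def by force
        next
          case 2 then show ?thesis using su y yw unfolding c2_def by force
        next
          case 3 then show ?thesis using su that unfolding c2_def by force
        qed
      qed
      ultimately show False using opt cK uW by blast
    qed
  qed
  have YY: "E (mate x2) (mate x)"
    if x2A: "x2 \<in> A" and xA: "x \<in> A" and xx: "x \<noteq> x2" and u': "u' \<in> U" "u' \<noteq> w" "\<not> E x2 u'" for x2 x u'
  proof (rule ccontr)
    assume ne: "\<not> E (mate x2) (mate x)"
    define y where "y = mate x"
    define y2 where "y2 = mate x2"
    have xW: "x \<in> W - U" using AU xA .
    have x2W: "x2 \<in> W - U" using AU x2A .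
    have y: "y \<in> W - U" "y \<noteq> x" "c y = c x" using mate[OF xW] mate_notU[OF xW] unfolding y_def by auto
    have y2: "y2 \<in> W - U" "y2 \<noteq> x2" "c y2 = c x2" using mate[OF x2W] mate_notU[OF x2W] unfolding y2_def by auto
    have uW: "u' \<in> W" using u' unfolding U_def by auto
    have cxx: "c x \<noteq> c x2" using proper Aclique[OF xA x2A xx] xW x2W by blast
    have nwx: "\<not> E w x" "\<not> E x w" using xA symE unfolding A_def by auto
    have nxu: "\<not> E x2 u'" "\<not> E u' x2" using u' symE by auto
    have nyy: "\<not> E y y2" "\<not> E y2 y" using ne symE unfolding y_def y2_def by auto
    have su: "v = u'" if "v \<in> W" "c v = c u'" for v using that u' unfolding U_def by auto
    have sx: "v = x \<or> v = y" if "v \<in> W" "c v = c x" for v using mate_only[OF xW that] unfolding y_def by auto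
    have sx2: "v = x2 \<or> v = y2" if "v \<in> W" "c v = c x2" for v using mate_only[OF x2W that] unfolding y2_def by auto
    have dist: "x \<noteq> w" "x2 \<noteq> w" "y \<noteq> w" "y2 \<noteq> w" "x \<noteq> u'" "x2 \<noteq> u'" "y \<noteq> u'" "y2 \<noteq> u'"
      using xW x2W y y2 wU u' by auto
    have dist2: "x \<noteq> y2" "y \<noteq> x2" "y \<noteq> y2" using cxx y y2 by auto
    have cdist: "c w \<noteq> c x" "c w \<noteq> c x2" "c u' \<noteq> c x" "c u' \<noteq> c x2" "c w \<noteq> c u'"
    proof -
      show "c w \<noteq> c x" using cw[of x] xW dist by auto
      show "c w \<noteq> c x2" using cw[of x2] x2W dist by auto
      show "c u' \<noteq> c x" using su[of x] xW dist by auto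
      show "c u' \<noteq> c x2" using su[of x2] x2W dist by auto
      show "c w \<noteq> c u'" using cw[of u'] uW u' by auto
    qed
    define c2 where "c2 = c(x2 := c u', y := c y2, x := c w)"
    have c2x: "c2 x = c w" "c2 y = c x2" "c2 x2 = c u'" using dist2 xx y y2 unfolding c2_def by auto
    have c2o: "c2 v = c v" if "v \<noteq> x" "v \<noteq> y" "v \<noteq> x2" for v using that unfolding c2_def by auto
    have key: "\<not> E a b" if ab: "a \<in> W" "b \<in> W" "c2 a = c2 b" "a \<noteq> b" for a b
    proof -
      consider "a = x" | "a = y" | "a = x2" | "a \<noteq> x" "a \<noteq> y" "a \<noteq> x2" by blast
      note ca = this
      consider "b = x" | "b = y" | "b = x2" | "b \<noteq> x" "b \<noteq> y" "b \<noteq> x2" by blast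
      note cb = this
      have nE: "c2 a = c2 b \<Longrightarrow> a \<in> W \<Longrightarrow> b \<in> W \<Longrightarrow> a \<noteq> b \<Longrightarrow> \<not> E a b" for a b
      proof -
        assume h: "c2 a = c2 b" "a \<in> W" "b \<in> W" "a \<noteq> b"
        show "\<not> E a b"
        proof (cases "a = x \<or> a = y \<or> a = x2")
          case True
          then show ?thesis
          proof (elim disjE)
            assume a: "a = x"
            show ?thesis
            proof (cases "b = y \<or> b = x2")
              case True then show ?thesis using h a c2x cdist by auto
            next
              case False
              then have "c b = c w" using h a c2x c2o[of b] by auto
              then have "b = w" using cw h by blast
              then show ?thesis using a nwx by simp
            qed
          next
            assume a: "a = y"
            show ?thesis
            proof (cases "b = x \<or> b = x2")
              case True then show ?thesis using h a c2x cdist cxx by auto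
            next
              case False
              then have "c b = c x2" using h a c2x c2o[of b] by auto
              then have "b = y2" using sx2 h False by blast
              then show ?thesis using a nyy by simp
            qed
          next
            assume a: "a = x2"
            show ?thesis
            proof (cases "b = x \<or> b = y")
              case True then show ?thesis using h a c2x cdist by auto
            next
              case False
              then have "c b = c u'" using h a c2x c2o[of b] by auto
              then have "b = u'" using su h by blast
              then show ?thesis using a nxu by simp
            qed
          qed
        next
          case False
          note aF = False
          show ?thesis
          proof (cases "b = x \<or> b = y \<or> b = x2")
            case True
            then show ?thesis
            proof (elim disjE)
              assume b: "b = x"
              then have "c a = c w" using h aF c2x c2o[of a] by auto
              then have "a = w" using cw h by blast
              then show ?thesis using b nwx by simp
            next
              assume b: "b = y"
              then have "c a = c x2" using h aF c2x c2o[of a] by auto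
              then have "a = y2" using sx2 h aF by blast
              then show ?thesis using b nyy by simp
            next
              assume b: "b = x2"
              then have "c a = c u'" using h aF c2x c2o[of a] by auto
              then have "a = u'" using su h by blast
              then show ?thesis using b nxu by simp
            qed
          next
            case False
            then have "c a = c b" using h aF c2o[of a] c2o[of b] by auto
            then show ?thesis using proper h by blast
          qed
        qed
      qed
      show ?thesis using nE ab by blast
    qed
    have "colouring W E K c2" unfolding colouring_def
    proof (intro conjI ballI impI)
      fix v assume "v \<in> W" then show "c2 v < K" using cK w y2 uW xW x2W y unfolding c2_def by auto
    next
      fix a b assume ab: "a \<in> W" "b \<in> W" "E a b"
      then show "c2 a \<noteq> c2 b" using key irr by blast
    qed
    moreover have "c2 v \<noteq> c x" if "v \<in> W" for v
    proof (cases "v = x \<or> v = y \<or> v = x2")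
      case True then show ?thesis using c2x cdist cxx by auto
    next
      case False
      then show ?thesis using c2o[of v] sx that by auto
    qed
    ultimately show False using opt cK xW by blast
  qed
  have UW: "U \<subseteq> W" unfolding U_def by auto
  have AW: "A \<subseteq> W" unfolding A_def by auto
  have finU: "finite U" using UW finW finite_subset by blast
  have finA: "finite A" using AW finW finite_subset by blast
  define C where "C j = {v\<in>W. c v = j}" for j
  have count: "card W + card U = 2 * K"
  proof -
    have W_eq: "W = (\<Union>j\<in>{..<K}. C j)" using cK unfolding C_def by auto
    have U_eq: "U = (\<Union>j\<in>{..<K}. C j \<inter> U)" using cK UW unfolding C_def by auto
    have cW: "card W = (\<Sum>j<K. card (C j))"
      by (subst W_eq, rule card_UN_disjoint) (auto simp: C_def finW)
    have cU: "card U = (\<Sum>j<K. card (C j \<inter> U))"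
      by (subst U_eq, rule card_UN_disjoint) (auto simp: C_def finW)
    have each: "card (C j) + card (C j \<inter> U) = 2" if j: "j < K" for j
    proof -
      have "C j \<noteq> {}"
      proof
        assume "C j = {}"
        then have "\<forall>v\<in>W. c v \<noteq> j" unfolding C_def by auto
        then show False using opt[OF col j] by blast
      qed
      then obtain v where v: "v \<in> C j" by auto
      show ?thesis
      proof (cases "v \<in> U")
        case True
        then have "C j = {v}" using v unfolding C_def U_def by auto
        then show ?thesis using True by simp
      next
        case False
        have vW: "v \<in> W - U" using v False unfolding C_def by auto
        have m: "mate v \<in> W - U" "mate v \<noteq> v" "c (mate v) = c v" using mate[OF vW] mate_notU[OF vW] by auto
        have "C j = {v, mate v}" using v m mate_only[OF vW] unfolding C_def by auto
        moreover have "C j \<inter> U = {}" using \<open>C j = {v, mate v}\<close> vW m by auto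
        ultimately show ?thesis using m by simp
      qed
    qed
    have "card W + card U = (\<Sum>j<K. card (C j) + card (C j \<inter> U))"
      using cW cU by (simp add: sum.distrib)
    also have "\<dots> = (\<Sum>j<K. 2)" using each by (intro sum.cong) auto
    finally show ?thesis by simp
  qed
  define X1 where "X1 = {x\<in>A. \<forall>u\<in>U. u \<noteq> w \<longrightarrow> E x u}"
  define X2 where "X2 = A - X1"
  have X12: "X1 \<subseteq> A" "X2 \<subseteq> A" "X1 \<inter> X2 = {}" "A = X1 \<union> X2" unfolding X1_def X2_def by auto
  have finX: "finite X1" "finite X2" using X12 finA finite_subset by metis+
  have cardA: "card A = card X1 + card X2" using X12 finX by (simp add: card_Un_disjoint)
  have inj: "inj_on mate A"
  proof
    fix a b assume ab: "a \<in> A" "b \<in> A" "mate a = mate b"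
    show "a = b"
    proof (rule ccontr)
      assume "a \<noteq> b"
      then have "E a b" using Aclique ab by blast
      moreover have "c a = c b" using mate[OF AU[OF ab(1)]] mate[OF AU[OF ab(2)]] ab(3) by simp
      ultimately show False using proper ab AW by blast
    qed
  qed
  have mateA: "mate ` A \<subseteq> W - U" using mate_notU AU by blast
  have Ka: "card U + card S \<le> om W"
    if S: "S \<subseteq> A" "\<forall>a\<in>S. \<forall>b\<in>S. a \<noteq> b \<longrightarrow> a \<in> X2 \<or> b \<in> X2" for S
  proof -
    have cl: "clique W E (U \<union> mate ` S)"
      unfolding clique_def
    proof (intro conjI ballI impI)
      show "U \<union> mate ` S \<subseteq> W" using UW mateA S by auto
    next
      fix p q assume p: "p \<in> U \<union> mate ` S" and q: "q \<in> U \<union> mate ` S" and pq: "p \<noteq> q"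
      show "E p q"
      proof (cases "p \<in> U")
        case pU: True
        show ?thesis
        proof (cases "q \<in> U")
          case True then show ?thesis using Uclique pU pq by blast
        next
          case False
          then obtain b where "b \<in> S" "q = mate b" using q by auto
          then show ?thesis using YU[of b p] pU S symE by blast
        qed
      next
        case pU: False
        then obtain a where a: "a \<in> S" "p = mate a" using p by auto
        show ?thesis
        proof (cases "q \<in> U")
          case True then show ?thesis using YU[of a q] a S by blast
        next
          case False
          then obtain b where b: "b \<in> S" "q = mate b" using q by auto
          then have "a \<noteq> b" using a pq by auto
          then have "a \<in> X2 \<or> b \<in> X2" using S a b by blast
          then show ?thesis
          proof
            assume "a \<in> X2"
            then obtain u' where "u' \<in> U" "u' \<noteq> w" "\<not> E a u'" unfolding X2_def X1_def using S a by auto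
            then show ?thesis using YY[of a b u'] a b S \<open>a \<noteq> b\<close> by blast
          next
            assume "b \<in> X2"
            then obtain u' where "u' \<in> U" "u' \<noteq> w" "\<not> E b u'" unfolding X2_def X1_def using S b by auto
            then have "E (mate b) (mate a)" using YY[of b a u'] a b S \<open>a \<noteq> b\<close> by blast
            then show ?thesis using a b symE by blast
          qed
        qed
      qed
    qed
    have "card (U \<union> mate ` S) = card U + card (mate ` S)"
      using mateA S finU finA by (intro card_Un_disjoint) (auto intro: finite_subset)
    also have "card (mate ` S) = card S" using inj S by (meson card_image inj_on_subset)
    finally show ?thesis using om_ge[OF finW cl] by simp
  qed
  have Kb: "card U - 1 + card X1 \<le> om W"
  proof -
    have cl: "clique W E ((U - {w}) \<union> X1)"
      unfolding clique_def
    proof (intro conjI ballI impI)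
      show "(U - {w}) \<union> X1 \<subseteq> W" using UW AW X12 by auto
    next
      fix p q assume p: "p \<in> (U - {w}) \<union> X1" and q: "q \<in> (U - {w}) \<union> X1" and pq: "p \<noteq> q"
      show "E p q"
      proof (cases "p \<in> X1")
        case True
        then show ?thesis using q pq Aclique X12 unfolding X1_def by auto
      next
        case False
        then have pU: "p \<in> U - {w}" using p by auto
        show ?thesis
        proof (cases "q \<in> X1")
          case True then show ?thesis using pU symE unfolding X1_def by auto
        next
          case False then show ?thesis using pU q pq Uclique by auto
        qed
      qed
    qed
    have "card ((U - {w}) \<union> X1) = card (U - {w}) + card X1"
      using finU finX AU X12 by (intro card_Un_disjoint) auto
    also have "card (U - {w}) = card U - 1" using wU by simp
    finally show ?thesis using om_ge[OF finW cl] by simp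
  qed
  have U1: "card U \<ge> 1" using wU finU by (metis One_nat_def Suc_leI card_gt_0_iff empty_iff)
  have main: "2 * card U + card A \<le> 2 * om W"
  proof (cases "X1 = {}")
    case True
    have "card U + card A \<le> om W" using Ka[of A] X12 True by auto
    then show ?thesis by linarith
  next
    case False
    then obtain x1 where x1: "x1 \<in> X1" by auto
    have "card U + card (insert x1 X2) \<le> om W"
      using X12 x1 by (intro Ka) auto
    moreover have "x1 \<notin> X2" using x1 X12 by blast
    then have "card (insert x1 X2) = card X2 + 1" using finX by simp
    ultimately have k1: "card U + card X2 + 1 \<le> om W" by simp
    show ?thesis using k1 Kb cardA U1 by linarith
  qed
  show ?thesis using count main ndA KK by linarith
qed

end



context sg
begin

lemma main:
  "W \<subseteq> V \<Longrightarrow> W \<noteq> {} \<Longrightarrow> H \<subseteq> W \<Longrightarrow>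
   \<exists>v\<in>W. 4 * chi W + card H + nd W v \<le> 2 * card W + 2 * om W + 3 * chi H"
proof (induction "card W" arbitrary: W H rule: less_induct)
  case less
  have WV: "W \<subseteq> V" and Wne: "W \<noteq> {}" using less.prems by auto
  have finW: "finite W" using WV finV finite_subset by blast
  have caseA: "\<exists>v\<in>W. 4 * chi W + card H + nd W v \<le> 2 * card W + 2 * om W + 3 * chi H"
    if H: "H \<subseteq> W" "H \<noteq> {}" for H
  proof -
    have finH: "finite H" using H finW finite_subset by blast
    obtain c where c: "colouring H E (chi H) c" using chi_opt finH by blast
    obtain h0 where h0: "h0 \<in> H" using H by auto
    define j where "j = c h0"
    have jk: "j < chi H" using c h0 unfolding colouring_def j_def by blast
    define I1 where "I1 = {h\<in>H. c h = j}"
    have "indep I1" using c unfolding indep_def I1_def colouring_def by fastforce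
    moreover have "I1 \<subseteq> W" using H unfolding I1_def by auto
    ultimately have "\<exists>I. I1 \<subseteq> I \<and> I \<subseteq> W \<and> indep I \<and> (\<forall>z\<in>W - I. \<exists>i\<in>I. E z i)"
      using maximal_indep[OF finW] by presburger
    then obtain I where I: "I1 \<subseteq> I" "I \<subseteq> W" "indep I" "\<forall>z\<in>W - I. \<exists>i\<in>I. E z i"
      by blast
    define W' where "W' = W - I"
    define H' where "H' = H - I"
    have h0I: "h0 \<in> I" using I h0 unfolding I1_def j_def by auto
    have finI: "finite I" using I finW finite_subset by blast
    have chiH': "chi H' \<le> chi H - 1"
    proof -
      have "colouring H' E (chi H) c" using colouring_mono[OF c] unfolding H'_def by auto
      moreover have "\<forall>v\<in>H'. c v \<noteq> j" using I unfolding H'_def I1_def by auto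
      ultimately have "colouring H' E (chi H - 1) (\<lambda>v. if c v > j then c v - 1 else c v)"
        using drop_colour jk by blast
      then show ?thesis by (rule chi_le)
    qed
    have cardH: "card H \<le> card H' + card I"
    proof -
      have "H \<subseteq> H' \<union> I" unfolding H'_def by auto
      then have "card H \<le> card (H' \<union> I)" using finH finI by (intro card_mono) (auto simp: H'_def)
      also have "\<dots> \<le> card H' + card I" by (rule card_Un_le)
      finally show ?thesis .
    qed
    have chiW: "chi W \<le> chi W' + 1"
    proof -
      have "finite W'" using finW unfolding W'_def by auto
      then obtain c' where "colouring W' E (chi W') c'" using chi_opt by blast
      then have "colouring (W' \<union> I) E (Suc (chi W')) (\<lambda>v. if v \<in> I then chi W' else c' v)"
        using extend_indep I by blast
      moreover have "W' \<union> I = W" using I unfolding W'_def by auto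
      ultimately have "colouring W E (Suc (chi W')) (\<lambda>v. if v \<in> I then chi W' else c' v)" by simp
      then show ?thesis using chi_le by fastforce
    qed
    have cardW: "card W = card W' + card I"
    proof -
      have "card W' = card W - card I" unfolding W'_def using card_Diff_subset[OF finI I(2)] .
      moreover have "card I \<le> card W" using card_mono[OF finW I(2)] .
      ultimately show ?thesis by linarith
    qed
    have cI: "card I \<ge> 1" using h0I finI by (metis One_nat_def Suc_leI card_gt_0_iff empty_iff)
    have om1: "1 \<le> om W" using om_single finW h0 H by blast
    have chiH1: "1 \<le> chi H" using jk by simp
    show ?thesis
    proof (cases "W' = {}")
      case True
      then have chiW1: "chi W \<le> 1" using chiW chi_empty by simp
      have "h0 \<in> W" using h0 H by auto
      moreover have "nd W h0 \<le> card W - 1" using nd_le finW \<open>h0 \<in> W\<close> by blast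
      moreover have "card H \<le> card W" using H finW card_mono by blast
      moreover have "card W \<ge> 1" using \<open>h0 \<in> W\<close> finW by (metis One_nat_def Suc_leI card_gt_0_iff empty_iff)
      ultimately have "4 * chi W + card H + nd W h0 \<le> 2 * card W + 2 * om W + 3 * chi H"
        using chiW1 om1 chiH1 by linarith
      then show ?thesis using \<open>h0 \<in> W\<close> by blast
    next
      case False
      have lt: "card W' < card W" using cardW cI by linarith
      have W'V: "W' \<subseteq> V" using WV unfolding W'_def by auto
      have H'W': "H' \<subseteq> W'" using H unfolding H'_def W'_def by auto
      obtain v where v: "v \<in> W'" and ih: "4 * chi W' + card H' + nd W' v \<le> 2 * card W' + 2 * om W' + 3 * chi H'"
        using less.hyps[OF lt W'V False H'W'] by blast
      obtain i where i: "i \<in> I" "E v i" using I v unfolding W'_def by blast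
      have ndv: "nd W v \<le> nd W' v + (card I - 1)"
        using nd_remove[OF finW I(2) _ i] v unfolding W'_def by blast
      have omW': "om W' \<le> om W" using om_mono finW unfolding W'_def by blast
      have "v \<in> W" using v unfolding W'_def by auto
      moreover have "4 * chi W + card H + nd W v \<le> 2 * card W + 2 * om W + 3 * chi H"
        using ih ndv omW' cI chiW cardH cardW chiH' chiH1 by linarith
      ultimately show ?thesis by blast
    qed
  qed
  show ?case
  proof (cases "H = {}")
    case False
    then show ?thesis using caseA less.prems by blast
  next
    case Hempty: True
    show ?thesis
    proof (cases "\<exists>a\<in>W. \<exists>b\<in>W. \<exists>d\<in>W. a \<noteq> b \<and> a \<noteq> d \<and> b \<noteq> d \<and> \<not> E a b \<and> \<not> E a d \<and> \<not> E b d")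
      case True
      then obtain a b d where abd: "a \<in> W" "b \<in> W" "d \<in> W" "a \<noteq> b" "a \<noteq> d" "b \<noteq> d"
        "\<not> E a b" "\<not> E a d" "\<not> E b d" by blast
      define T where "T = {a, b, d}"
      have "colouring T E 1 (\<lambda>_. 0)" using abd symE irr unfolding colouring_def T_def by auto
      then have chiT: "chi T \<le> 1" using chi_le by blast
      have cT: "card T = 3" using abd unfolding T_def by auto
      obtain v where "v \<in> W" "4 * chi W + card T + nd W v \<le> 2 * card W + 2 * om W + 3 * chi T"
        using caseA[of T] abd unfolding T_def by auto
      then have "4 * chi W + card H + nd W v \<le> 2 * card W + 2 * om W + 3 * chi H"
        using chiT cT Hempty chi_empty by simp
      then show ?thesis using \<open>v \<in> W\<close> by blast
    next
      case False
      then have nt: "\<forall>a\<in>W. \<forall>b\<in>W. \<forall>d\<in>W. a \<noteq> b \<longrightarrow> a \<noteq> d \<longrightarrow> b \<noteq> d \<longrightarrow> E a b \<or> E a d \<or> E b d"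
        by blast
      obtain w where w: "w \<in> W" using Wne by auto
      show ?thesis
      proof (cases "W = {w}")
        case True
        have "colouring W E 1 (\<lambda>_. 0)" using True irr unfolding colouring_def by auto
        then have "chi W \<le> 1" using chi_le by blast
        moreover have "nd W w = 0" using True unfolding nd_def by simp
        moreover have "1 \<le> om W" using om_single finW w by blast
        moreover have "card W = 1" using True by simp
        ultimately have "4 * chi W + card H + nd W w \<le> 2 * card W + 2 * om W + 3 * chi H"
          using Hempty chi_empty by simp
        then show ?thesis using w by blast
      next
        case Wne2: False
        show ?thesis
        proof (cases "chi (W - {w}) < chi W")
          case True
          then have "4 * chi W + nd W w \<le> 2 * card W + 2 * om W" using critical WV w nt by blast
          then have "4 * chi W + card H + nd W w \<le> 2 * card W + 2 * om W + 3 * chi H"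
            using Hempty chi_empty by simp
          then show ?thesis using w by blast
        next
          case False
          have lt: "card (W - {w}) < card W" using w finW by (rule card_Diff1_less[rotated])
          have ne: "W - {w} \<noteq> {}" using Wne2 w by auto
          obtain v where v: "v \<in> W - {w}" and ih: "4 * chi (W - {w}) + card ({}::'a set) + nd (W - {w}) v
              \<le> 2 * card (W - {w}) + 2 * om (W - {w}) + 3 * chi {}"
            using less.hyps[OF lt _ ne, of "{}"] WV by blast
          have ndv: "nd W v \<le> nd (W - {w}) v + 1"
          proof -
            have "{u\<in>W. u \<noteq> v \<and> \<not> E v u} \<subseteq> insert w {u\<in>W - {w}. u \<noteq> v \<and> \<not> E v u}" by auto
            then have "nd W v \<le> card (insert w {u\<in>W - {w}. u \<noteq> v \<and> \<not> E v u})"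
              unfolding nd_def using finW by (intro card_mono) auto
            also have "\<dots> \<le> card {u\<in>W - {w}. u \<noteq> v \<and> \<not> E v u} + 1" by (rule card_insert_le_m1) auto
            also have "\<dots> = nd (W - {w}) v + 1" unfolding nd_def ..
            finally show ?thesis .
          qed
          have omW': "om (W - {w}) \<le> om W" using om_mono finW by blast
          have cW: "card W = card (W - {w}) + 1" using w finW lt by simp
          have "4 * chi W + nd W v \<le> 2 * card W + 2 * om W"
            using ih ndv omW' cW False chi_empty by simp
          then have "4 * chi W + card H + nd W v \<le> 2 * card W + 2 * om W + 3 * chi H"
            using Hempty chi_empty by simp
          then show ?thesis using v by blast
        qed
      qed
    qed
  qed
qed

end



theorem corollary12:
  fixes V :: "'a set" and E :: "'a \<Rightarrow> 'a \<Rightarrow> bool"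
  assumes "graph V E"
  shows "real (chromatic_number V E) \<le>
           (real (clique_number V E) + real (max_degree V E) + 1) / 2
           + (real (min_degree V (complement V E)) - real_of_int (chromatic_excess V E)) / 4"
proof -
  interpret sg V E by unfold_locales (rule assms)
  have Vne: "V \<noteq> {}" using assms by (simp add: graph_def)
  have chi_ind: "chromatic_number H (induced E H) = chi H" for H
    unfolding chromatic_number_def colouring_def induced_def by simp
  define S where "S = {H. H \<subseteq> V \<and> H \<noteq> {}}"
  have "S \<subseteq> Pow V" unfolding S_def by auto
  then have finS: "finite S" using finV by (meson finite_Pow_iff finite_subset)
  have neS: "S \<noteq> {}" using Vne unfolding S_def by auto
  have "chromatic_excess V E \<in> (\<lambda>H. int (card H) - 3 * int (chromatic_number H (induced E H))) ` S"
    unfolding chromatic_excess_def S_def[symmetric] using finS neS by (intro Max_in) auto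
  then obtain H0 where H0: "H0 \<subseteq> V" "H0 \<noteq> {}"
    and eta: "chromatic_excess V E = int (card H0) - 3 * int (chi H0)"
    unfolding S_def using chi_ind by auto
  obtain v where v: "v \<in> V" and I1: "4 * chi V + card H0 + nd V v \<le> 2 * card V + 2 * om V + 3 * chi H0"
    using main[of V H0] Vne H0 by blast
  have degsum: "degree V E x + nd V x + 1 = card V" if x: "x \<in> V" for x
  proof -
    have "V = insert x ({u\<in>V. E x u} \<union> {u\<in>V. u \<noteq> x \<and> \<not> E x u})" using x by auto
    moreover have "x \<notin> {u\<in>V. E x u} \<union> {u\<in>V. u \<noteq> x \<and> \<not> E x u}" using irr by auto
    moreover have "card ({u\<in>V. E x u} \<union> {u\<in>V. u \<noteq> x \<and> \<not> E x u}) = card {u\<in>V. E x u} + card {u\<in>V. u \<noteq> x \<and> \<not> E x u}"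
      using finV by (intro card_Un_disjoint) auto
    ultimately show ?thesis unfolding degree_def nd_def using finV
      by (metis (no_types, lifting) Suc_eq_plus1 card_insert_disjoint finite_Un finite_subset mem_Collect_eq subsetI)
  qed
  have degc: "degree V (complement V E) x = nd V x" if "x \<in> V" for x
    unfolding degree_def complement_def nd_def using that by (intro arg_cong[where f=card]) auto
  have finD: "finite (degree V E ` V)" using finV by simp
  have "max_degree V E \<in> degree V E ` V" unfolding max_degree_def using finD Vne by (intro Max_in) auto
  then obtain v0 where v0: "v0 \<in> V" "max_degree V E = degree V E v0" by auto
  have Dge: "degree V E x \<le> max_degree V E" if "x \<in> V" for x
    unfolding max_degree_def using finD that by (intro Max_ge) auto
  have finC: "finite (degree V (complement V E) ` V)" using finV by simp
  have "min_degree V (complement V E) \<in> degree V (complement V E) ` V"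
    unfolding min_degree_def using finC Vne by (intro Min_in) auto
  then obtain v1 where v1: "v1 \<in> V" "min_degree V (complement V E) = nd V v1" using degc by auto
  have n0v: "nd V v0 \<le> nd V v" using degsum[OF v] degsum[OF v0(1)] Dge[OF v] v0 by linarith
  have n0v1: "nd V v0 \<le> nd V v1" using degsum[OF v1(1)] degsum[OF v0(1)] Dge[OF v1(1)] v0 by linarith
  have R1: "4 * real (chi V) + real (card H0) + real (nd V v) \<le> 2 * real (card V) + 2 * real (om V) + 3 * real (chi H0)"
    using of_nat_mono[OF I1] by simp
  have R2: "real (degree V E v0) + real (nd V v0) + 1 = real (card V)"
    using arg_cong[OF degsum[OF v0(1)], of real] by simp
  have R3: "real (nd V v0) \<le> real (nd V v)" "real (nd V v0) \<le> real (nd V v1)" using n0v n0v1 by auto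
  have R4: "real_of_int (chromatic_excess V E) = real (card H0) - 3 * real (chi H0)" using eta by simp
  have "4 * real (chi V) \<le> 2 * real (om V) + 2 * real (degree V E v0) + 2 + real (nd V v1) - (real (card H0) - 3 * real (chi H0))"
    using R1 R2 R3 by linarith
  then show ?thesis unfolding v1(2) v0(2) R4 by (simp add: field_simps)
qed


end
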